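(* Let $M_K$ be an Oeljeklaus–Toma manifold of complex dimension $m$, and let $\tilde\omega(t)=e^{-t}\omega_{\mathrm{OT}}+(1-e^{-t})\alpha$ with associated Hermitian metric $\tilde g(t)$ (notation in the context). Denote by $\tilde\nabla$, $\tilde T$ and $\widetilde{\mathrm{Rm}}$ the Chern connection, torsion and curvature of $\tilde g$. Then there is a constant $C$ such that for all $t\ge0$: (i) $|\tilde T|_{\tilde g}\le C$; (ii) $|\bar\partial\tilde T|_{\tilde g}+|\tilde\nabla\tilde T|_{\tilde g}+|\widetilde{\mathrm{Rm}}|_{\tilde g}\le C$; (iii) $|\overline{\tilde\nabla}\,\overline{\tilde\nabla}\tilde T|_{\tilde g}+|\tilde\nabla\overline{\tilde\nabla}\tilde T|_{\tilde g}+|\tilde\nabla\widetilde{\mathrm{Rm}}|_{\tilde g}\le C$.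
   Context: Let $K$ be a number field of degree $n=s+2$ over $\mathbb{Q}$ with $s\ge 1$, having exactly $s$ real embeddings $\sigma_1,\dots,\sigma_s$ and exactly one pair of complex conjugate embeddings $\sigma_{s+1},\sigma_{s+2}=\overline{\sigma_{s+1}}$; put $m=s+1$. Let $O_K$ be its ring of integers, $O_K^{*,+}$ the group of units $a$ with $\sigma_i(a)>0$ for $1\le i\le s$, and $G\subset O_K^{*,+}$ an admissible subgroup (rank $s$, with $\{(\log\sigma_1(a),\dots,\log\sigma_s(a)):a\in G\}$ a full lattice in $\mathbb{R}^{m-1}$). With $\mathbb{H}$ the upper half plane, $b\in O_K$ acts on $\mathbb{H}^{m-1}\times\mathbb{C}$ by $z\mapsto z+(\sigma_1(b),\dots,\sigma_m(b))$ and $a\in G$ by $z\mapsto(\sigma_1(a)z_1,\dots,\sigma_m(a)z_m)$; the generated group $\Gamma$ acts freely and properly discontinuously and $M_K=(\mathbb{H}^{m-1}\times\mathbb{C})/\Gamma$. Write $z_j=x_j+\sqrt{-1}y_j$. The $\Gamma$-invariant forms $\alpha=\sqrt{-1}\sum_{i=1}^{m-1}\frac{dz_i\wedge d\bar z_i}{4y_i^2}$, $\beta=\sqrt{-1}(y_1\cdots y_{m-1})dz_m\wedge d\bar z_m$, $\gamma=\sqrt{-1}\sum_{k,\ell=1}^{m-1}\frac{dz_k\wedge d\bar z_\ell}{4y_ky_\ell}$ descend to $M_K$, and $\omega_{\mathrm{OT}}=\alpha+\beta+\gamma$ is a Hermitian metric. The torsion is $\tilde T_{ij\bar\ell}=\partial_i\tilde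 g_{j\bar\ell}-\partial_j\tilde g_{i\bar\ell}$, the Chern curvature $\tilde R_{i\bar jk\bar\ell}=-\partial_i\partial_{\bar j}\tilde g_{k\bar\ell}+\tilde g^{\bar qp}\partial_i\tilde g_{k\bar q}\partial_{\bar j}\tilde g_{p\bar\ell}$, and $\overline{\tilde\nabla}$ denotes the $(0,1)$ part of the Chern connection. *)

theory Defs
  imports "HOL-Analysis.Analysis"
begin

(* Points of the universal cover H^(m-1) x C of M_K, m = s+1.
   Coordinates are indexed 0..s (0-based): z_0..z_(s-1) in H, z_s in C. *)
type_synonym point = "nat \<Rightarrow> complex"

(* a covariant tensor field: index list -> component; the kind list records for
   each slot whether it is an unbarred (False) or barred (True) index *)
type_synonym tensor = "point \<Rightarrow> nat list \<Rightarrow> complex"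

definition OT_cover :: "nat \<Rightarrow> point set" where
  "OT_cover s = {z. \<forall>i<s. Im (z i) > 0}"

definition dX :: "nat \<Rightarrow> (point \<Rightarrow> complex) \<Rightarrow> point \<Rightarrow> complex" where
  "dX k f z = vector_derivative (\<lambda>r::real. f (z(k := z k + of_real r))) (at 0)"

definition dY :: "nat \<Rightarrow> (point \<Rightarrow> complex) \<Rightarrow> point \<Rightarrow> complex" where
  "dY k f z = vector_derivative (\<lambda>r::real. f (z(k := z k + \<i> * of_real r))) (at 0)"

definition del :: "nat \<Rightarrow> (point \<Rightarrow> complex) \<Rightarrow> point \<Rightarrow> complex" where
  "del k f z = (dX k f z - \<i> * dY k f z) / 2"

definition delbar :: "nat \<Rightarrow> (point \<Rightarrow> complex) \<Rightarrow> point \<Rightarrow> complex" where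
  "delbar k f z = (dX k f z + \<i> * dY k f z) / 2"

(* components g_{k lbar} of the forms alpha, beta, gamma (omega = sqrt(-1) g_{k lbar} dz_k ^ dzbar_l) *)
definition alpha_c :: "nat \<Rightarrow> point \<Rightarrow> nat \<Rightarrow> nat \<Rightarrow> complex" where
  "alpha_c s z k l = (if k < s \<and> l = k then complex_of_real (1 / (4 * (Im (z k))\<^sup>2)) else 0)"

definition beta_c :: "nat \<Rightarrow> point \<Rightarrow> nat \<Rightarrow> nat \<Rightarrow> complex" where
  "beta_c s z k l = (if k = s \<and> l = s then complex_of_real (\<Prod>i<s. Im (z i)) else 0)"

definition gamma_c :: "nat \<Rightarrow> point \<Rightarrow> nat \<Rightarrow> nat \<Rightarrow> complex" where
  "gamma_c s z k l = (if k < s \<and> l < s then complex_of_real (1 / (4 * Im (z k) * Im (z l))) else 0)"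

definition gOT :: "nat \<Rightarrow> point \<Rightarrow> nat \<Rightarrow> nat \<Rightarrow> complex" where
  "gOT s z k l = alpha_c s z k l + beta_c s z k l + gamma_c s z k l"

definition gt :: "nat \<Rightarrow> real \<Rightarrow> point \<Rightarrow> nat \<Rightarrow> nat \<Rightarrow> complex" where
  "gt s t z k l = complex_of_real (exp (- t)) * gOT s z k l
                  + complex_of_real (1 - exp (- t)) * alpha_c s z k l"

(* inverse metric: ginv b c = g^{bbar c}, i.e. sum_b g_{a bbar} g^{bbar c} = delta_a^c *)
definition ginv :: "nat \<Rightarrow> (point \<Rightarrow> nat \<Rightarrow> nat \<Rightarrow> complex) \<Rightarrow> point \<Rightarrow> nat \<Rightarrow> nat \<Rightarrow> complex" where
  "ginv m g z = (SOME H. (\<forall>a<m. \<forall>c<m. (\<Sum>b<m. g z a b * H b c) = (if a = c then 1 else 0))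
                      \<and> (\<forall>b c. \<not> (b < m \<and> c < m) \<longrightarrow> H b c = 0))"

definition Chr :: "nat \<Rightarrow> (point \<Rightarrow> nat \<Rightarrow> nat \<Rightarrow> complex) \<Rightarrow> point \<Rightarrow> nat \<Rightarrow> nat \<Rightarrow> nat \<Rightarrow> complex" where
  "Chr m g z i k p = (\<Sum>q<m. ginv m g z q p * del i (\<lambda>w. g w k q) z)"

(* torsion T_{ij lbar} = del_i g_{j lbar} - del_j g_{i lbar}; kinds [F,F,T] *)
definition torsion :: "(point \<Rightarrow> nat \<Rightarrow> nat \<Rightarrow> complex) \<Rightarrow> tensor" where
  "torsion g z I = (if length I = 3 then
      del (I!0) (\<lambda>w. g w (I!1) (I!2)) z - del (I!1) (\<lambda>w. g w (I!0) (I!2)) z else 0)"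

(* Chern curvature R_{i jbar k lbar}; kinds [F,T,F,T] *)
definition curv :: "nat \<Rightarrow> (point \<Rightarrow> nat \<Rightarrow> nat \<Rightarrow> complex) \<Rightarrow> tensor" where
  "curv m g z I = (if length I = 4 then
      - del (I!0) (delbar (I!1) (\<lambda>w. g w (I!2) (I!3))) z
      + (\<Sum>p<m. \<Sum>q<m. ginv m g z q p * del (I!0) (\<lambda>w. g w (I!2) q) z
                                   * delbar (I!1) (\<lambda>w. g w p (I!3)) z)
    else 0)"

(* dbar of the (2,1)-form T: (dbar T)_{ij kbar lbar} = delbar_k T_{ij lbar} - delbar_l T_{ij kbar};
   kinds [F,F,T,T] *)
definition dbarT :: "tensor \<Rightarrow> tensor" where
  "dbarT T z I = (if length I = 4 then
      delbar (I!2) (\<lambda>w. T w [I!0, I!1, I!3]) z - delbar (I!3) (\<lambda>w. T w [I!0, I!1, I!2]) z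
    else 0)"

(* (1,0) part of Chern covariant derivative; new slot prepended (kind False) *)
definition nabla :: "nat \<Rightarrow> (point \<Rightarrow> nat \<Rightarrow> nat \<Rightarrow> complex) \<Rightarrow> bool list \<Rightarrow> tensor \<Rightarrow> tensor" where
  "nabla m g ks A z I = (case I of [] \<Rightarrow> 0 | a # J \<Rightarrow>
      del a (\<lambda>w. A w J) z
      - (\<Sum>r<length J. \<Sum>q<m. (if ks ! r then 0 else Chr m g z a (J!r) q) * A z (J[r := q])))"

(* (0,1) part of Chern covariant derivative; new slot prepended (kind True) *)
definition nablabar :: "nat \<Rightarrow> (point \<Rightarrow> nat \<Rightarrow> nat \<Rightarrow> complex) \<Rightarrow> bool list \<Rightarrow> tensor \<Rightarrow> tensor" where
  "nablabar m g ks A z I = (case I of [] \<Rightarrow> 0 | a # J \<Rightarrow>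
      delbar a (\<lambda>w. A w J) z
      - (\<Sum>r<length J. \<Sum>q<m. (if ks ! r then cnj (Chr m g z a (J!r) q) else 0) * A z (J[r := q])))"

definition tnorm :: "nat \<Rightarrow> (point \<Rightarrow> nat \<Rightarrow> nat \<Rightarrow> complex) \<Rightarrow> bool list \<Rightarrow> tensor \<Rightarrow> point \<Rightarrow> real" where
  "tnorm m g ks A z = sqrt (Re (\<Sum>I\<in>{I. length I = length ks \<and> set I \<subseteq> {..<m}}.
      \<Sum>J\<in>{J. length J = length ks \<and> set J \<subseteq> {..<m}}.
        A z I * cnj (A z J) *
        (\<Prod>r<length ks. if ks ! r then ginv m g z (I!r) (J!r) else ginv m g z (J!r) (I!r))))"

end

theory Submission imports Defs begin

definition mono :: "nat \<Rightarrow> (nat \<Rightarrow> real) \<Rightarrow> point \<Rightarrow> real" where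
  "mono s E z = (\<Prod>i<s. Im (z i) powr E i)"
definition wE :: "nat \<Rightarrow> nat \<Rightarrow> nat \<Rightarrow> real" where
  "wE s k i = (if k < s then (if i = k then -1 else 0) else 1/2)"
definition W :: "nat \<Rightarrow> nat list \<Rightarrow> nat \<Rightarrow> real" where
  "W s I i = sum_list (map (\<lambda>k. wE s k i) I)"
definition ep1 :: "nat \<Rightarrow> nat \<Rightarrow> real" where
  "ep1 s k = (if k < s then 0 else 1/2)"
definition ep :: "nat \<Rightarrow> nat list \<Rightarrow> real" where
  "ep s I = sum_list (map (ep1 s) I)"
definition MF :: "nat \<Rightarrow> real \<Rightarrow> (nat \<Rightarrow> real) \<Rightarrow> real \<Rightarrow> real \<Rightarrow> (point \<Rightarrow> complex) \<Rightarrow> bool" where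
  "MF s \<epsilon> E e C \<phi> \<longleftrightarrow> (\<exists>c. cmod c \<le> C \<and>
     (\<forall>z\<in>OT_cover s. \<phi> z = c * complex_of_real (\<epsilon> powr e * mono s E z)))"

lemma W_Nil[simp]: "W s [] i = 0" by (simp add: W_def)
lemma W_Cons: "W s (a # I) i = wE s a i + W s I i" by (simp add: W_def)
lemma W_Cons_fun: "W s (a # I) = (\<lambda>i. wE s a i + W s I i)" by (simp add: W_def[abs_def])
lemma ep_Nil[simp]: "ep s [] = 0" by (simp add: ep_def)
lemma ep_Cons: "ep s (a # I) = ep1 s a + ep s I" by (simp add: ep_def)

lemma cover_pos: "z \<in> OT_cover s \<Longrightarrow> i < s \<Longrightarrow> Im (z i) > 0"
  by (simp add: OT_cover_def)

lemma mono_pos: "z \<in> OT_cover s \<Longrightarrow> mono s E z > 0"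
  unfolding mono_def by (rule prod_pos) (auto dest: cover_pos)

lemma mono_add: "mono s (\<lambda>i. E i + F i) z = mono s E z * mono s F z"
  unfolding mono_def by (simp add: powr_add prod.distrib)

lemma mono_cong: "(\<And>i. i < s \<Longrightarrow> E i = F i) \<Longrightarrow> mono s E z = mono s F z"
  unfolding mono_def by (rule prod.cong) auto

lemma mono_uminus: "z \<in> OT_cover s \<Longrightarrow> mono s (\<lambda>i. - E i) z = 1 / mono s E z"
  unfolding mono_def by (simp add: powr_minus divide_inverse flip: prod_inversef)

lemma mono_zero[simp]: "z \<in> OT_cover s \<Longrightarrow> mono s (\<lambda>i. 0) z = 1"
  unfolding mono_def by (auto intro!: prod.neutral dest: cover_pos)

lemma MF_nonneg: "MF s \<epsilon> E e C \<phi> \<Longrightarrow> 0 \<le> C"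
  unfolding MF_def using norm_ge_zero order_trans by blast

lemma MF_mono: "MF s \<epsilon> E e C \<phi> \<Longrightarrow> C \<le> C' \<Longrightarrow> MF s \<epsilon> E e C' \<phi>"
  unfolding MF_def by (meson order_trans)

lemma MF_cong: "MF s \<epsilon> E e C \<phi> \<Longrightarrow> (\<And>i. i < s \<Longrightarrow> E i = E' i) \<Longrightarrow> e = e'
   \<Longrightarrow> (\<And>z. z \<in> OT_cover s \<Longrightarrow> \<phi> z = \<psi> z) \<Longrightarrow> C \<le> C' \<Longrightarrow> MF s \<epsilon> E' e' C' \<psi>"
  unfolding MF_def
  by (smt (verit, ccfv_SIG) mono_cong)

lemma MF_zero: "0 \<le> C \<Longrightarrow> MF s \<epsilon> E e C (\<lambda>z. 0)"
  unfolding MF_def by (rule exI[of _ 0]) auto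

lemma MF_add: "MF s \<epsilon> E e C1 \<phi> \<Longrightarrow> MF s \<epsilon> E e C2 \<psi> \<Longrightarrow> MF s \<epsilon> E e (C1 + C2) (\<lambda>z. \<phi> z + \<psi> z)"
  unfolding MF_def
  apply (elim exE conjE)
  subgoal for c d by (rule exI[of _ "c + d"]) (auto simp: distrib_right intro: order_trans[OF norm_triangle_ineq])
  done

lemma MF_neg: "MF s \<epsilon> E e C \<phi> \<Longrightarrow> MF s \<epsilon> E e C (\<lambda>z. - \<phi> z)"
  unfolding MF_def
  apply (elim exE conjE)
  subgoal for c by (rule exI[of _ "- c"]) auto
  done

lemma MF_diff: "MF s \<epsilon> E e C1 \<phi> \<Longrightarrow> MF s \<epsilon> E e C2 \<psi> \<Longrightarrow> MF s \<epsilon> E e (C1 + C2) (\<lambda>z. \<phi> z - \<psi> z)"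
  using MF_add[OF _ MF_neg[of s \<epsilon> E e C2 \<psi>]] by simp

lemma MF_cnj: "MF s \<epsilon> E e C \<phi> \<Longrightarrow> MF s \<epsilon> E e C (\<lambda>z. cnj (\<phi> z))"
  unfolding MF_def
  apply (elim exE conjE)
  subgoal for c by (rule exI[of _ "cnj c"]) auto
  done

lemma MF_if: "MF s \<epsilon> E e C \<phi> \<Longrightarrow> MF s \<epsilon> E e C (\<lambda>z. if b then 0 else \<phi> z)"
  by (cases b) (auto intro: MF_zero MF_nonneg)

lemma MF_if2: "MF s \<epsilon> E e C \<phi> \<Longrightarrow> MF s \<epsilon> E e C (\<lambda>z. if b then \<phi> z else 0)"
  by (cases b) (auto intro: MF_zero MF_nonneg)

lemma MF_sum: "finite A \<Longrightarrow> (\<And>a. a \<in> A \<Longrightarrow> MF s \<epsilon> E e (C a) (\<phi> a))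
   \<Longrightarrow> MF s \<epsilon> E e (\<Sum>a\<in>A. C a) (\<lambda>z. \<Sum>a\<in>A. \<phi> a z)"
proof (induction A rule: finite_induct)
  case empty then show ?case by (simp add: MF_zero)
next
  case (insert x F)
  then show ?case using MF_add[of s \<epsilon> E e "C x" "\<phi> x" "sum C F" "\<lambda>z. \<Sum>a\<in>F. \<phi> a z"] by simp
qed

lemma MF_mult: "0 < \<epsilon> \<Longrightarrow> MF s \<epsilon> E e C1 \<phi> \<Longrightarrow> MF s \<epsilon> F f C2 \<psi> \<Longrightarrow>
   MF s \<epsilon> (\<lambda>i. E i + F i) (e + f) (C1 * C2) (\<lambda>z. \<phi> z * \<psi> z)"
  unfolding MF_def
  apply (elim exE conjE)
  subgoal for c d
    apply (rule exI[of _ "c * d"])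
    apply (auto simp: norm_mult mono_add powr_add intro!: mult_mono order_trans[OF norm_ge_zero])
    done
  done

lemma mono_split: "k < s \<Longrightarrow> mono s E w = Im (w k) powr E k * (\<Prod>i\<in>{..<s}-{k}. Im (w i) powr E i)"
  unfolding mono_def by (rule prod.remove) auto

lemma dX_loc:
  assumes "\<forall>w\<in>OT_cover s. \<phi> w = K * complex_of_real (mono s E w)" "z \<in> OT_cover s"
  shows "dX k \<phi> z = 0"
proof -
  have "\<forall>r::real. \<phi> (z(k := z k + of_real r)) = \<phi> z"
  proof
    fix r :: real
    have inz: "z(k := z k + of_real r) \<in> OT_cover s" using assms(2) by (auto simp: OT_cover_def)
    have "mono s E (z(k := z k + of_real r)) = mono s E z"
      unfolding mono_def by (rule prod.cong) auto
    then show "\<phi> (z(k := z k + of_real r)) = \<phi> z" using assms inz by simp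
  qed
  then show ?thesis unfolding dX_def by simp
qed

lemma dY_loc_ge:
  assumes "\<forall>w\<in>OT_cover s. \<phi> w = K * complex_of_real (mono s E w)" "z \<in> OT_cover s" "s \<le> k"
  shows "dY k \<phi> z = 0"
proof -
  have "\<forall>r::real. \<phi> (z(k := z k + \<i> * of_real r)) = \<phi> z"
  proof
    fix r :: real
    have inz: "z(k := z k + \<i> * of_real r) \<in> OT_cover s" using assms(2,3) by (auto simp: OT_cover_def)
    have "mono s E (z(k := z k + \<i> * of_real r)) = mono s E z"
      unfolding mono_def by (rule prod.cong) (use assms(3) in auto)
    then show "\<phi> (z(k := z k + \<i> * of_real r)) = \<phi> z" using assms inz by simp
  qed
  then show ?thesis unfolding dY_def by simp
qed

lemma dY_loc_lt:
  assumes "\<forall>w\<in>OT_cover s. \<phi> w = K * complex_of_real (mono s E w)" "z \<in> OT_cover s" "k < s"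
  shows "dY k \<phi> z = K * complex_of_real (E k * mono s (\<lambda>i. E i + wE s k i) z)"
proof -
  define y where "y = Im (z k)"
  have y: "y > 0" using assms cover_pos y_def by blast
  define Q where "Q = (\<Prod>i\<in>{..<s}-{k}. Im (z i) powr E i)"
  define g where "g = (\<lambda>r::real. K * complex_of_real (Q * (y + r) powr E k))"
  have eq: "\<phi> (z(k := z k + \<i> * of_real r)) = g r" if "r \<in> {-y<..}" for r
  proof -
    have inz: "z(k := z k + \<i> * of_real r) \<in> OT_cover s" using assms(2,3) that
      by (auto simp: OT_cover_def y_def)
    have "mono s E (z(k := z k + \<i> * of_real r)) = (y + r) powr E k * Q"
      unfolding mono_split[OF assms(3)] Q_def y_def by (auto intro!: prod.cong)
    then show ?thesis using assms inz by (simp add: g_def mult_ac)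
  qed
  have d1: "((\<lambda>r. y + r) has_real_derivative 1) (at 0)"
    by (auto intro!: derivative_eq_intros)
  have d2: "((\<lambda>r. (y + r) powr E k) has_real_derivative E k * (y + 0) powr (E k - real 1) * 1) (at 0)"
    by (rule DERIV_fun_powr[OF d1]) (use y in simp)
  have d3: "(g has_vector_derivative K * complex_of_real (Q * (E k * y powr (E k - 1)))) (at 0)"
    unfolding g_def
    by (rule has_vector_derivative_mult_right, rule has_vector_derivative_of_real)
       (use DERIV_cmult[OF d2, of Q] in simp)
  have d4: "((\<lambda>r. \<phi> (z(k := z k + \<i> * of_real r))) has_vector_derivative
        K * complex_of_real (Q * (E k * y powr (E k - 1)))) (at 0)"
    by (rule has_vector_derivative_transform_within_open[OF d3, of "{-y<..}"]) (use y eq in auto)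
  have m: "mono s (\<lambda>i. E i + wE s k i) z = y powr (E k - 1) * Q"
    unfolding mono_split[OF assms(3)] Q_def y_def by (auto simp: wE_def assms(3) intro!: prod.cong)
  show ?thesis unfolding dY_def vector_derivative_at[OF d4] m by (simp add: mult_ac)
qed

lemma W_single[simp]: "W s [k] i = wE s k i" by (simp add: W_def)
lemma ep_single[simp]: "ep s [k] = ep1 s k" by (simp add: ep_def)

lemma MF_delgen:
  assumes "MF s \<epsilon> E e C \<phi>" "k < Suc s" "0 \<le> B" "\<forall>i<s. \<bar>E i\<bar> \<le> B"
    and D: "\<And>z. z \<in> OT_cover s \<Longrightarrow> D \<phi> z = (dX k \<phi> z + \<sigma> * dY k \<phi> z) / 2" "cmod \<sigma> = 1"
  shows "MF s \<epsilon> (\<lambda>i. E i + W s [k] i) (e + ep s [k]) (C * B) (D \<phi>)"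
proof -
  obtain c where c: "cmod c \<le> C" "\<forall>z\<in>OT_cover s. \<phi> z = c * complex_of_real (\<epsilon> powr e * mono s E z)"
    using assms(1) unfolding MF_def by blast
  have C0: "0 \<le> C" using MF_nonneg assms(1) by blast
  have loc: "\<forall>w\<in>OT_cover s. \<phi> w = (c * complex_of_real (\<epsilon> powr e)) * complex_of_real (mono s E w)"
    using c(2) by (simp add: mult_ac)
  show ?thesis
  proof (cases "k < s")
    case True
    show ?thesis unfolding MF_def
    proof (intro exI[of _ "c * (\<sigma> / 2) * E k"] conjI ballI)
      have "cmod (c * (\<sigma> / 2) * complex_of_real (E k)) = cmod c * \<bar>E k\<bar> / 2"
        by (simp add: norm_mult assms(6))
      also have "\<dots> \<le> C * B / 2" using c(1) assms(4) True C0
        by (intro divide_right_mono mult_mono) auto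
      also have "\<dots> \<le> C * B" using C0 assms(3) by simp
      finally show "cmod (c * (\<sigma> / 2) * complex_of_real (E k)) \<le> C * B" .
      fix z assume z: "z \<in> OT_cover s"
      show "D \<phi> z = c * (\<sigma> / 2) * complex_of_real (E k) *
          complex_of_real (\<epsilon> powr (e + ep s [k]) * mono s (\<lambda>i. E i + W s [k] i) z)"
        unfolding D(1)[OF z] dX_loc[OF loc z] dY_loc_lt[OF loc z True]
        using True by (simp add: ep1_def)
    qed
  next
    case False
    then have ks: "s \<le> k" by simp
    show ?thesis unfolding MF_def
      by (intro exI[of _ 0] conjI ballI)
        (use C0 assms(3) in \<open>auto simp: D(1) dX_loc[OF loc] dY_loc_ge[OF loc _ ks]\<close>)
  qed
qed

lemma MF_del:
  assumes "MF s \<epsilon> E e C \<phi>" "k < Suc s" "0 \<le> B" "\<forall>i<s. \<bar>E i\<bar> \<le> B"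
  shows "MF s \<epsilon> (\<lambda>i. E i + W s [k] i) (e + ep s [k]) (C * B) (del k \<phi>)"
  by (rule MF_delgen[OF assms, of "del k" "-\<i>"]) (auto simp: del_def)

lemma MF_delbar:
  assumes "MF s \<epsilon> E e C \<phi>" "k < Suc s" "0 \<le> B" "\<forall>i<s. \<bar>E i\<bar> \<le> B"
  shows "MF s \<epsilon> (\<lambda>i. E i + W s [k] i) (e + ep s [k]) (C * B) (delbar k \<phi>)"
  by (rule MF_delgen[OF assms, of "delbar k" "\<i>"]) (auto simp: delbar_def)

definition gr :: "nat \<Rightarrow> real \<Rightarrow> point \<Rightarrow> nat \<Rightarrow> nat \<Rightarrow> real" where
  "gr s \<epsilon> z a b = (if a < s \<and> b < s then (if a = b then 1 / (4 * (Im (z a))\<^sup>2) else 0)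
       + \<epsilon> / (4 * Im (z a) * Im (z b))
     else if a = s \<and> b = s then \<epsilon> * (\<Prod>i<s. Im (z i)) else 0)"

definition Hr :: "nat \<Rightarrow> real \<Rightarrow> point \<Rightarrow> nat \<Rightarrow> nat \<Rightarrow> real" where
  "Hr s \<epsilon> z b c = (if b < s \<and> c < s then
       4 * Im (z b) * Im (z c) * ((if b = c then 1 else 0) - \<epsilon> / (1 + \<epsilon> * s))
     else if b = s \<and> c = s then 1 / (\<epsilon> * (\<Prod>i<s. Im (z i))) else 0)"

lemma gt_eq: "gt s t z a b = complex_of_real (gr s (exp (- t)) z a b)"
  unfolding gt_def gOT_def alpha_c_def beta_c_def gamma_c_def gr_def
  by (auto simp: power2_eq_square algebra_simps)

lemma gr_sym: "gr s \<epsilon> z a b = gr s \<epsilon> z b a"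
  unfolding gr_def by (auto simp: mult_ac)

lemma Hr_sym: "Hr s \<epsilon> z a b = Hr s \<epsilon> z b a"
  unfolding Hr_def by (auto simp: mult_ac)

lemma prod_Im_pos: "z \<in> OT_cover s \<Longrightarrow> (\<Prod>i<s. Im (z i)) > 0"
  by (rule prod_pos) (auto dest: cover_pos)

lemma inv_right:
  assumes z: "z \<in> OT_cover s" and e: "0 < \<epsilon>" and a: "a < Suc s" and c: "c < Suc s"
  shows "(\<Sum>b<Suc s. gr s \<epsilon> z a b * Hr s \<epsilon> z b c) = (if a = c then 1 else 0)"
proof -
  define \<kappa> where "\<kappa> = \<epsilon> / (1 + \<epsilon> * s)"
  have den: "1 + \<epsilon> * s > 0" using e by (simp add: add_pos_nonneg)
  have P: "(\<Prod>i<s. Im (z i)) > 0" using prod_Im_pos[OF z] .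
  show ?thesis
  proof (cases "a < s")
    case as: True
    have ya: "Im (z a) > 0" using z as cover_pos by blast
    show ?thesis
    proof (cases "c < s")
      case cs: True
      have yc: "Im (z c) > 0" using z cs cover_pos by blast
      have trm: "gr s \<epsilon> z a b * Hr s \<epsilon> z b c =
          (if b = a then Im (z c) / Im (z a) * ((if a = c then 1 else 0) - \<kappa>) else 0)
          + \<epsilon> * (Im (z c) / Im (z a)) * ((if b = c then 1 else 0) - \<kappa>)" if b: "b < s" for b
      proof -
        have yb: "Im (z b) > 0" using z b cover_pos by blast
        show ?thesis using as cs b ya yb yc unfolding gr_def Hr_def \<kappa>_def[symmetric]
          by (auto simp: field_simps power2_eq_square)
      qed
      have "(\<Sum>b<Suc s. gr s \<epsilon> z a b * Hr s \<epsilon> z b c) = (\<Sum>b<s. gr s \<epsilon> z a b * Hr s \<epsilon> z b c)"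
        using as by (simp add: gr_def)
      also have "\<dots> = (\<Sum>b<s. (if b = a then Im (z c) / Im (z a) * ((if a = c then 1 else 0) - \<kappa>) else 0)
          + \<epsilon> * (Im (z c) / Im (z a)) * ((if b = c then 1 else 0) - \<kappa>))"
        by (rule sum.cong) (auto simp: trm)
      also have "\<dots> = Im (z c) / Im (z a) * ((if a = c then 1 else 0) - \<kappa>)
          + \<epsilon> * (Im (z c) / Im (z a)) * (1 - s * \<kappa>)"
      proof -
        define K where "K = \<epsilon> * (Im (z c) / Im (z a))"
        define X where "X = Im (z c) / Im (z a) * ((if a = c then 1 else 0) - \<kappa>)"
        have h: "(\<Sum>b<s. ((if b = c then 1 else 0) - \<kappa>)) = 1 - s * \<kappa>"
          using cs by (simp add: sum_subtractf)
        have "(\<Sum>b<s. (if b = a then X else 0) + K * ((if b = c then 1 else 0) - \<kappa>))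
             = (\<Sum>b<s. (if b = a then X else 0)) + (\<Sum>b<s. K * ((if b = c then 1 else 0) - \<kappa>))"
          by (rule sum.distrib)
        also have "\<dots> = X + K * (1 - s * \<kappa>)"
          using as by (simp only: sum_distrib_left[symmetric] h) simp
        finally show ?thesis unfolding K_def X_def .
      qed
      also have "\<dots> = (if a = c then 1 else 0)"
      proof -
        have k: "\<epsilon> * (1 - s * \<kappa>) = \<kappa>" using den unfolding \<kappa>_def by (simp add: field_simps)
        have "\<epsilon> * (Im (z c) / Im (z a)) * (1 - s * \<kappa>) = (Im (z c) / Im (z a)) * \<kappa>"
          using k by (metis mult.assoc mult.commute)
        moreover have "(Im (z c) / Im (z a)) * ((if a = c then 1 else 0) - \<kappa>) + (Im (z c) / Im (z a)) * \<kappa>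
            = (if a = c then 1 else 0)" using ya by (cases "a = c") (simp_all add: right_diff_distrib)
        ultimately show ?thesis by (simp only:)
      qed
      finally show ?thesis .
    next
      case False
      then have "c = s" using c by simp
      then show ?thesis using as by (auto simp: gr_def Hr_def intro!: sum.neutral)
    qed
  next
    case False
    then have as: "a = s" using a by simp
    show ?thesis
    proof (cases "c < s")
      case True
      then show ?thesis using as by (auto simp: gr_def Hr_def intro!: sum.neutral)
    next
      case False
      then have "c = s" using c by simp
      then show ?thesis using as P e z by (simp add: gr_def Hr_def) (auto dest: cover_pos)
    qed
  qed
qed

lemma inv_left:
  assumes z: "z \<in> OT_cover s" and e: "0 < \<epsilon>" and a: "a < Suc s" and c: "c < Suc s"
  shows "(\<Sum>b<Suc s. Hr s \<epsilon> z a b * gr s \<epsilon> z b c) = (if a = c then 1 else 0)"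
  using inv_right[OF z e c a] by (auto simp: gr_sym Hr_sym mult.commute)

definition Hc :: "nat \<Rightarrow> real \<Rightarrow> point \<Rightarrow> nat \<Rightarrow> nat \<Rightarrow> complex" where
  "Hc s \<epsilon> z b c = complex_of_real (Hr s \<epsilon> z b c)"

lemma ginv_eq:
  assumes z: "z \<in> OT_cover s"
  shows "ginv (Suc s) (gt s t) z = Hc s (exp (- t)) z"
proof -
  define \<epsilon> where "\<epsilon> = exp (- t)"
  have e: "0 < \<epsilon>" by (simp add: \<epsilon>_def)
  define m where "m = Suc s"
  let ?P = "\<lambda>X. (\<forall>a<m. \<forall>c<m. (\<Sum>b<m. gt s t z a b * X b c) = (if a = c then 1 else 0))
                      \<and> (\<forall>b c. \<not> (b < m \<and> c < m) \<longrightarrow> X b c = 0)"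
  have gtc: "gt s t z a b = complex_of_real (gr s \<epsilon> z a b)" for a b by (simp add: gt_eq \<epsilon>_def)
  have PH: "?P (Hc s \<epsilon> z)"
  proof (intro conjI allI impI)
    fix a c assume "a < m" "c < m"
    then show "(\<Sum>b<m. gt s t z a b * Hc s \<epsilon> z b c) = (if a = c then 1 else 0)"
      using inv_right[OF z e, of a c] unfolding gtc Hc_def m_def
      by (simp flip: of_real_mult of_real_sum)
  next
    fix b c assume "\<not> (b < m \<and> c < m)"
    then show "Hc s \<epsilon> z b c = 0" by (auto simp: Hc_def Hr_def m_def)
  qed
  have uniq: "X = Hc s \<epsilon> z" if PX: "?P X" for X
  proof (intro ext)
    fix b c
    show "X b c = Hc s \<epsilon> z b c"
    proof (cases "b < m \<and> c < m")
      case False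
      then show ?thesis using PX PH by auto
    next
      case True
      then have bm: "b < m" and cm: "c < m" by auto
      have L: "(\<Sum>d<m. Hc s \<epsilon> z b d * gt s t z d a) = (if b = a then 1 else 0)" if "a < m" for a
        using inv_left[OF z e, of b a] bm that unfolding gtc Hc_def m_def
        by (simp flip: of_real_mult of_real_sum)
      have "X b c = (\<Sum>a<m. if b = a then X a c else 0)"
        using bm by simp
      also have "\<dots> = (\<Sum>a<m. (\<Sum>d<m. Hc s \<epsilon> z b d * gt s t z d a) * X a c)"
        by (rule sum.cong) (auto simp: L)
      also have "\<dots> = (\<Sum>d<m. Hc s \<epsilon> z b d * (\<Sum>a<m. gt s t z d a * X a c))"
        unfolding sum_distrib_right sum_distrib_left mult.assoc by (rule sum.swap)
      also have "\<dots> = (\<Sum>d<m. Hc s \<epsilon> z b d * (if d = c then 1 else 0))"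
        by (rule sum.cong) (use PX cm in auto)
      also have "\<dots> = (\<Sum>d<m. if d = c then Hc s \<epsilon> z b d else 0)"
        by (rule sum.cong) auto
      also have "\<dots> = Hc s \<epsilon> z b c" using cm by simp
      finally show ?thesis .
    qed
  qed
  show ?thesis unfolding ginv_def m_def[symmetric] \<epsilon>_def[symmetric]
    by (rule some_equality[of ?P, OF PH uniq])
qed

definition nu :: "nat \<Rightarrow> real \<Rightarrow> point \<Rightarrow> nat \<Rightarrow> real" where
  "nu s \<epsilon> z k = (if k < s then 1 / Im (z k) else sqrt (\<epsilon> * (\<Prod>i<s. Im (z i))))"

lemma nu_pos: "z \<in> OT_cover s \<Longrightarrow> 0 < \<epsilon> \<Longrightarrow> nu s \<epsilon> z k > 0"
  unfolding nu_def using cover_pos prod_Im_pos by auto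

lemma val_single:
  assumes z: "z \<in> OT_cover s" and e: "0 < \<epsilon>"
  shows "\<epsilon> powr ep1 s a * mono s (wE s a) z = nu s \<epsilon> z a"
proof (cases "a < s")
  case True
  have ya: "Im (z a) > 0" using z True cover_pos by blast
  have "mono s (wE s a) z = Im (z a) powr (-1) * (\<Prod>i\<in>{..<s}-{a}. Im (z i) powr wE s a i)"
    using mono_split[OF True, of "wE s a"] True by (simp add: wE_def)
  also have "(\<Prod>i\<in>{..<s}-{a}. Im (z i) powr wE s a i) = 1"
    using z True by (auto intro!: prod.neutral simp: wE_def dest: cover_pos)
  finally show ?thesis using True ya e by (simp add: ep1_def nu_def powr_minus_divide)
next
  case False
  have "mono s (wE s a) z = (\<Prod>i<s. Im (z i) powr (1/2))"
    unfolding mono_def using False by (auto simp: wE_def)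
  also have "\<dots> = (\<Prod>i<s. Im (z i)) powr (1/2)" by (simp add: prod_powr_distrib)
  finally show ?thesis using False e prod_Im_pos[OF z]
    by (simp add: ep1_def nu_def powr_half_sqrt real_sqrt_mult)
qed

lemma val_eq:
  assumes z: "z \<in> OT_cover s" and e: "0 < \<epsilon>"
  shows "\<epsilon> powr ep s I * mono s (W s I) z = (\<Prod>r<length I. nu s \<epsilon> z (I!r))"
proof (induction I)
  case Nil
  then show ?case using z e by (simp add: W_def[abs_def])
next
  case (Cons a I)
  have "\<epsilon> powr ep s (a # I) * mono s (W s (a # I)) z
      = (\<epsilon> powr ep1 s a * mono s (wE s a) z) * (\<epsilon> powr ep s I * mono s (W s I) z)"
    by (simp add: ep_Cons W_Cons_fun powr_add mono_add)
  also have "\<dots> = nu s \<epsilon> z a * (\<Prod>r<length I. nu s \<epsilon> z (I!r))"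
    using val_single[OF z e] Cons by simp
  finally show ?case by (simp only: length_Cons prod.lessThan_Suc_shift nth_Cons_0 nth_Cons_Suc)
qed

lemma val_neg:
  assumes z: "z \<in> OT_cover s" and e: "0 < \<epsilon>"
  shows "\<epsilon> powr (- e) * mono s (\<lambda>i. - E i) z = 1 / (\<epsilon> powr e * mono s E z)"
  using mono_uminus[OF z] by (simp add: powr_minus divide_inverse)

lemma MF_val:
  assumes e: "0 < \<epsilon>" and "\<And>z. z \<in> OT_cover s \<Longrightarrow> \<phi> z = c * complex_of_real (\<Prod>r<length I. nu s \<epsilon> z (I!r))"
    and "cmod c \<le> C"
  shows "MF s \<epsilon> (W s I) (ep s I) C \<phi>"
  unfolding MF_def using assms val_eq[OF _ e] by auto

lemma MF_val_neg:
  assumes e: "0 < \<epsilon>" and "\<And>z. z \<in> OT_cover s \<Longrightarrow> \<phi> z = c * complex_of_real (1 / (\<Prod>r<length I. nu s \<epsilon> z (I!r)))"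
    and "cmod c \<le> C"
  shows "MF s \<epsilon> (\<lambda>i. - W s I i) (- ep s I) C \<phi>"
  unfolding MF_def using assms val_eq[OF _ e] val_neg[OF _ e] by auto

lemma nu_sq: "z \<in> OT_cover s \<Longrightarrow> 0 < \<epsilon> \<Longrightarrow> \<not> k < s \<Longrightarrow> nu s \<epsilon> z k * nu s \<epsilon> z k = \<epsilon> * (\<Prod>i<s. Im (z i))"
  unfolding nu_def using prod_Im_pos[of z s]
  by (simp flip: power2_eq_square)

lemma MF_gt:
  assumes t: "0 \<le> t" and a: "a < Suc s" and b: "b < Suc s"
  shows "MF s (exp (- t)) (W s [a, b]) (ep s [a, b]) 1 (\<lambda>z. gt s t z a b)"
proof -
  define \<epsilon> where "\<epsilon> = exp (- t)"
  have e: "0 < \<epsilon>" "\<epsilon> \<le> 1" using t by (auto simp: \<epsilon>_def)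
  define c where "c = (if a < s \<and> b < s then (if a = b then 1/4 else 0) + \<epsilon> / 4
                       else if a = s \<and> b = s then 1 else (0::real))"
  have "MF s \<epsilon> (W s [a, b]) (ep s [a, b]) 1 (\<lambda>z. gt s t z a b)"
  proof (rule MF_val[OF e(1), where c = "complex_of_real c"])
    fix z assume z: "z \<in> OT_cover s"
    have "gr s \<epsilon> z a b = c * (nu s \<epsilon> z a * nu s \<epsilon> z b)"
    proof (cases "a < s \<and> b < s")
      case True
      have "Im (z a) > 0" "Im (z b) > 0" using True z cover_pos by auto
      then show ?thesis unfolding gr_def c_def nu_def using True
        by (auto simp: field_simps power2_eq_square)
    next
      case False
      then show ?thesis using a b nu_sq[OF z e(1), of s] unfolding gr_def c_def
        by auto
    qed
    then show "gt s t z a b = complex_of_real c *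
        complex_of_real (\<Prod>r<length [a, b]. nu s \<epsilon> z ([a, b] ! r))"
      by (simp add: gt_eq \<epsilon>_def[symmetric] numeral_2_eq_2 lessThan_Suc)
  next
    show "cmod (complex_of_real c) \<le> 1" using e unfolding c_def by auto
  qed
  then show ?thesis by (simp add: \<epsilon>_def)
qed

lemma MF_H:
  assumes t: "0 \<le> t" and a: "a < Suc s" and b: "b < Suc s"
  shows "MF s (exp (- t)) (\<lambda>i. - W s [a, b] i) (- ep s [a, b]) 8 (\<lambda>z. Hc s (exp (- t)) z a b)"
proof -
  define \<epsilon> where "\<epsilon> = exp (- t)"
  have e: "0 < \<epsilon>" "\<epsilon> \<le> 1" using t by (auto simp: \<epsilon>_def)
  define \<kappa> where "\<kappa> = \<epsilon> / (1 + \<epsilon> * s)"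
  have den: "0 < 1 + \<epsilon> * s" using e by (simp add: add_pos_nonneg)
  have es: "0 \<le> \<epsilon> * s" using e by simp
  have k1: "\<epsilon> \<le> 1 * (1 + \<epsilon> * s)" using es e(2) by (smt (verit))
  have k: "0 \<le> \<kappa>" "\<kappa> \<le> 1" unfolding \<kappa>_def using e den
     apply simp
    using k1 pos_divide_le_eq[OF den] by blast
  define c where "c = (if a < s \<and> b < s then 4 * ((if a = b then 1 else 0) - \<kappa>)
                       else if a = s \<and> b = s then 1 else (0::real))"
  have "MF s \<epsilon> (\<lambda>i. - W s [a, b] i) (- ep s [a, b]) 8 (\<lambda>z. Hc s \<epsilon> z a b)"
  proof (rule MF_val_neg[OF e(1), where c = "complex_of_real c"])
    fix z assume z: "z \<in> OT_cover s"
    have "Hr s \<epsilon> z a b = c * (1 / (nu s \<epsilon> z a * nu s \<epsilon> z b))"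
    proof (cases "a < s \<and> b < s")
      case True
      have "Im (z a) > 0" "Im (z b) > 0" using True z cover_pos by auto
      then show ?thesis unfolding Hr_def c_def nu_def \<kappa>_def using True
        by (auto simp: field_simps)
    next
      case False
      then show ?thesis using a b nu_sq[OF z e(1), of s] unfolding Hr_def c_def
        by auto
    qed
    then show "Hc s \<epsilon> z a b = complex_of_real c *
        complex_of_real (1 / (\<Prod>r<length [a, b]. nu s \<epsilon> z ([a, b] ! r)))"
      by (simp add: Hc_def numeral_2_eq_2 lessThan_Suc)
  next
    show "cmod (complex_of_real c) \<le> 8" using k unfolding c_def by auto
  qed
  then show ?thesis by (simp add: \<epsilon>_def)
qed

lemma wE_bound: "\<bar>wE s k i\<bar> \<le> 1" by (simp add: wE_def)

lemma W_bound: "\<bar>W s I i\<bar> \<le> real (length I)"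
proof (induction I)
  case Nil then show ?case by simp
next
  case (Cons a I)
  then show ?case using wE_bound[of s a i] by (simp add: W_Cons)
qed

lemma W_update: "r < length J \<Longrightarrow> W s (J[r := q]) i = W s J i - wE s (J!r) i + wE s q i"
proof (induction J arbitrary: r)
  case Nil then show ?case by simp
next
  case (Cons a J)
  then show ?case by (cases r) (auto simp: W_Cons)
qed

lemma ep_update: "r < length J \<Longrightarrow> ep s (J[r := q]) = ep s J - ep1 s (J!r) + ep1 s q"
proof (induction J arbitrary: r)
  case Nil then show ?case by simp
next
  case (Cons a J)
  then show ?case by (cases r) (auto simp: ep_Cons)
qed

definition CChr :: "nat \<Rightarrow> real" where "CChr s = real (Suc s) * 16"

lemma MF_Chr:
  assumes t: "0 \<le> t" and i: "i < Suc s" and k: "k < Suc s" and p: "p < Suc s"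
  shows "MF s (exp (- t)) (\<lambda>j. W s [i, k] j - W s [p] j) (ep s [i, k] - ep s [p]) (CChr s)
           (\<lambda>z. Chr (Suc s) (gt s t) z i k p)"
proof -
  define \<epsilon> where "\<epsilon> = exp (- t)"
  have e: "0 < \<epsilon>" by (simp add: \<epsilon>_def)
  have T: "MF s \<epsilon> (\<lambda>j. W s [i, k] j - W s [p] j) (ep s [i, k] - ep s [p])
             16 (\<lambda>z. Hc s \<epsilon> z q p * del i (\<lambda>w. gt s t w k q) z)" if q: "q < Suc s" for q
  proof -
    have "MF s \<epsilon> (\<lambda>j. - W s [q, p] j + (W s [k, q] j + W s [i] j)) (- ep s [q, p] + (ep s [k, q] + ep s [i]))
             (8 * (1 * 2)) (\<lambda>z. Hc s \<epsilon> z q p * del i (\<lambda>w. gt s t w k q) z)"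
      unfolding \<epsilon>_def
      by (rule MF_mult[OF _ MF_H[OF t q p] MF_del[OF MF_gt[OF t k q] i]])
         (auto intro: order_trans[OF W_bound])
    then show ?thesis by (rule MF_cong) (auto simp: W_Cons ep_Cons)
  qed
  have S: "MF s \<epsilon> (\<lambda>j. W s [i, k] j - W s [p] j) (ep s [i, k] - ep s [p]) (\<Sum>q<Suc s. 16)
      (\<lambda>z. \<Sum>q<Suc s. Hc s \<epsilon> z q p * del i (\<lambda>w. gt s t w k q) z)"
    by (rule MF_sum[OF _ T]) auto
  show ?thesis unfolding \<epsilon>_def[symmetric]
    by (rule MF_cong[OF S]) (auto simp: Chr_def ginv_eq \<epsilon>_def CChr_def)
qed

definition Good :: "nat \<Rightarrow> real \<Rightarrow> nat \<Rightarrow> real \<Rightarrow> tensor \<Rightarrow> bool" where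
  "Good s \<epsilon> n C A \<longleftrightarrow> (\<forall>I. length I = n \<and> set I \<subseteq> {..<Suc s} \<longrightarrow> MF s \<epsilon> (W s I) (ep s I) C (\<lambda>z. A z I))"

lemma len3: "length I = 3 \<Longrightarrow> \<exists>a b c. I = [a, b, c]"
  by (auto simp: numeral_3_eq_3 length_Suc_conv)
lemma len4: "length I = 4 \<Longrightarrow> \<exists>a b c d. I = [a, b, c, d]"
  by (auto simp: numeral_eq_Suc length_Suc_conv)

lemma Good_torsion:
  assumes t: "0 \<le> t"
  shows "Good s (exp (- t)) 3 4 (torsion (gt s t))"
  unfolding Good_def
proof (intro allI impI)
  fix I :: "nat list" assume I: "length I = 3 \<and> set I \<subseteq> {..<Suc s}"
  then obtain a b c where abc: "I = [a, b, c]" using len3 by blast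
  then have v: "a < Suc s" "b < Suc s" "c < Suc s" using I by auto
  have M: "MF s (exp (- t)) (\<lambda>i. W s [b, c] i + W s [a] i) (ep s [b, c] + ep s [a]) (1 * 2) (del a (\<lambda>w. gt s t w b c))"
    "MF s (exp (- t)) (\<lambda>i. W s [a, c] i + W s [b] i) (ep s [a, c] + ep s [b]) (1 * 2) (del b (\<lambda>w. gt s t w a c))"
    by (rule MF_del[OF MF_gt[OF t]]; use v in \<open>auto intro: order_trans[OF W_bound]\<close>)+
  show "MF s (exp (- t)) (W s I) (ep s I) 4 (\<lambda>z. torsion (gt s t) z I)"
    by (rule MF_cong[OF MF_diff[OF M(1) MF_cong[OF M(2)]]])
       (auto simp: abc W_Cons ep_Cons torsion_def)
qed

lemma abs_sum_le: "\<bar>x\<bar> \<le> a \<Longrightarrow> \<bar>y::real\<bar> \<le> b \<Longrightarrow> a + b \<le> c \<Longrightarrow> \<bar>x + y\<bar> \<le> c"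
  by linarith

lemma Good_dbarT:
  assumes G: "Good s \<epsilon> 3 C T"
  shows "Good s \<epsilon> 4 (C * 3 + C * 3) (dbarT T)"
  unfolding Good_def
proof (intro allI impI)
  fix I :: "nat list" assume I: "length I = 4 \<and> set I \<subseteq> {..<Suc s}"
  then obtain a b c d where abc: "I = [a, b, c, d]" using len4 by blast
  then have v: "a < Suc s" "b < Suc s" "c < Suc s" "d < Suc s" using I by auto
  have G1: "MF s \<epsilon> (W s [a, b, d]) (ep s [a, b, d]) C (\<lambda>z. T z [a, b, d])"
   and G2: "MF s \<epsilon> (W s [a, b, c]) (ep s [a, b, c]) C (\<lambda>z. T z [a, b, c])"
    using G v unfolding Good_def by auto
  have M1: "MF s \<epsilon> (\<lambda>i. W s [a, b, d] i + W s [c] i) (ep s [a, b, d] + ep s [c]) (C * 3) (delbar c (\<lambda>w. T w [a, b, d]))"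
    by (rule MF_delbar[OF G1]) (use v in \<open>auto intro: order_trans[OF W_bound]\<close>)
  have M2: "MF s \<epsilon> (\<lambda>i. W s [a, b, c] i + W s [d] i) (ep s [a, b, c] + ep s [d]) (C * 3) (delbar d (\<lambda>w. T w [a, b, c]))"
    by (rule MF_delbar[OF G2]) (use v in \<open>auto intro: order_trans[OF W_bound]\<close>)
  note M = M1 M2
  show "MF s \<epsilon> (W s I) (ep s I) (C * 3 + C * 3) (\<lambda>z. dbarT T z I)"
    by (rule MF_cong[OF MF_diff[OF M(1) MF_cong[OF M(2)]]])
       (auto simp: abc W_Cons ep_Cons dbarT_def)
qed

lemma Good_curv:
  assumes t: "0 \<le> t"
  shows "Good s (exp (- t)) 4 (2 * 3 + real (Suc s) * (real (Suc s) * 32)) (curv (Suc s) (gt s t))"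
  unfolding Good_def
proof (intro allI impI)
  define \<epsilon> where "\<epsilon> = exp (- t)"
  have e: "0 < \<epsilon>" by (simp add: \<epsilon>_def)
  fix I :: "nat list" assume I: "length I = 4 \<and> set I \<subseteq> {..<Suc s}"
  then obtain a b c d where abc: "I = [a, b, c, d]" using len4 by blast
  then have v: "a < Suc s" "b < Suc s" "c < Suc s" "d < Suc s" using I by auto
  have wb: "\<bar>W s [c, d] i\<bar> \<le> 2" "\<bar>W s [c, d] i + W s [b] i\<bar> \<le> 3" for i
    using W_bound[of s "[c, d]" i] wE_bound[of s b i] by auto
  have M1: "MF s \<epsilon> (\<lambda>i. (W s [c, d] i + W s [b] i) + W s [a] i) ((ep s [c, d] + ep s [b]) + ep s [a]) ((1 * 2) * 3)
       (del a (delbar b (\<lambda>w. gt s t w c d)))"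
    unfolding \<epsilon>_def
    apply (rule MF_del[OF MF_delbar[OF MF_gt[OF t]]])
    using v wb by auto
  have TT: "MF s \<epsilon> (W s I) (ep s I) 32
       (\<lambda>z. Hc s \<epsilon> z q p * del a (\<lambda>w. gt s t w c q) z * delbar b (\<lambda>w. gt s t w p d) z)"
    if q: "q < Suc s" and p: "p < Suc s" for p q
  proof -
    have "MF s \<epsilon> (\<lambda>i. (- W s [q, p] i + (W s [c, q] i + W s [a] i)) + (W s [p, d] i + W s [b] i))
             ((- ep s [q, p] + (ep s [c, q] + ep s [a])) + (ep s [p, d] + ep s [b]))
             ((8 * (1 * 2)) * (1 * 2))
             (\<lambda>z. Hc s \<epsilon> z q p * del a (\<lambda>w. gt s t w c q) z * delbar b (\<lambda>w. gt s t w p d) z)"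
      unfolding \<epsilon>_def
      by (rule MF_mult[OF _ MF_mult[OF _ MF_H[OF t q p] MF_del[OF MF_gt[OF t v(3) q] v(1)]]
                 MF_delbar[OF MF_gt[OF t p v(4)] v(2)]])
         (auto intro: order_trans[OF W_bound])
    then show ?thesis by (rule MF_cong) (auto simp: abc W_Cons ep_Cons)
  qed
  have S1: "MF s \<epsilon> (W s I) (ep s I) (\<Sum>q<Suc s. 32)
       (\<lambda>z. \<Sum>q<Suc s. Hc s \<epsilon> z q p * del a (\<lambda>w. gt s t w c q) z * delbar b (\<lambda>w. gt s t w p d) z)"
    if p: "p < Suc s" for p
    by (rule MF_sum[OF _ TT]) (use p in auto)
  have S2: "MF s \<epsilon> (W s I) (ep s I) (\<Sum>p<Suc s. \<Sum>q<Suc s. 32)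
       (\<lambda>z. \<Sum>p<Suc s. \<Sum>q<Suc s. Hc s \<epsilon> z q p * del a (\<lambda>w. gt s t w c q) z * delbar b (\<lambda>w. gt s t w p d) z)"
    by (rule MF_sum[OF _ S1]) auto
  have S3: "MF s \<epsilon> (W s I) (ep s I) ((1 * 2) * 3 + (\<Sum>p<Suc s. \<Sum>q<Suc s. 32))
       (\<lambda>z. - del a (delbar b (\<lambda>w. gt s t w c d)) z + (\<Sum>p<Suc s. \<Sum>q<Suc s. Hc s \<epsilon> z q p * del a (\<lambda>w. gt s t w c q) z * delbar b (\<lambda>w. gt s t w p d) z))"
    by (rule MF_add[OF MF_neg[OF MF_cong[OF M1]] S2]) (auto simp: abc W_Cons ep_Cons)
  show "MF s (exp (- t)) (W s I) (ep s I) (2 * 3 + real (Suc s) * (real (Suc s) * 32)) (\<lambda>z. curv (Suc s) (gt s t) z I)"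
    unfolding \<epsilon>_def[symmetric]
    by (rule MF_cong[OF S3]) (auto simp: abc curv_def ginv_eq \<epsilon>_def)
qed

lemma Good_nabla_gen:
  assumes t: "0 \<le> t" and G: "Good s (exp (- t)) n CA A"
    and Ch: "\<And>r a k q. a < Suc s \<Longrightarrow> k < Suc s \<Longrightarrow> q < Suc s \<Longrightarrow> r < n \<Longrightarrow>
        MF s (exp (- t)) (\<lambda>j. W s [a, k] j - W s [q] j) (ep s [a, k] - ep s [q]) (CChr s) (\<lambda>z. X r z a k q)"
    and N: "\<And>z a J. z \<in> OT_cover s \<Longrightarrow> Nb z (a # J) = D a (\<lambda>w. A w J) z
        - (\<Sum>r<length J. \<Sum>q<Suc s. X r z a (J!r) q * A z (J[r := q]))"
    and Dl: "\<And>E e C \<phi> k B. MF s (exp (- t)) E e C \<phi> \<Longrightarrow> k < Suc s \<Longrightarrow> 0 \<le> B \<Longrightarrow> \<forall>i<s. \<bar>E i\<bar> \<le> B \<Longrightarrow>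
        MF s (exp (- t)) (\<lambda>i. E i + W s [k] i) (e + ep s [k]) (C * B) (D k \<phi>)"
  shows "Good s (exp (- t)) (Suc n) (CA * n + real n * (real (Suc s) * (CChr s * CA))) Nb"
  unfolding Good_def
proof (intro allI impI)
  define \<epsilon> where "\<epsilon> = exp (- t)"
  have e: "0 < \<epsilon>" by (simp add: \<epsilon>_def)
  fix I :: "nat list" assume I: "length I = Suc n \<and> set I \<subseteq> {..<Suc s}"
  then obtain a J where aJ: "I = a # J" by (cases I) auto
  have a: "a < Suc s" and J: "length J = n" "set J \<subseteq> {..<Suc s}" using I aJ by auto
  have GJ: "MF s \<epsilon> (W s J) (ep s J) CA (\<lambda>z. A z J)" using G J unfolding Good_def \<epsilon>_def by auto
  have D1: "MF s \<epsilon> (\<lambda>i. W s J i + W s [a] i) (ep s J + ep s [a]) (CA * n) (D a (\<lambda>w. A w J))"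
    unfolding \<epsilon>_def by (rule Dl[OF GJ[unfolded \<epsilon>_def] a]) (use W_bound J in auto)
  have TT: "MF s \<epsilon> (W s (a # J)) (ep s (a # J)) (CChr s * CA)
       (\<lambda>z. X r z a (J!r) q * A z (J[r := q]))" if r: "r < n" and q: "q < Suc s" for r q
  proof -
    have "J!r \<in> set J" using J r by simp
    then have Jr: "J!r < Suc s" using J(2) by auto
    have GJ': "MF s \<epsilon> (W s (J[r := q])) (ep s (J[r := q])) CA (\<lambda>z. A z (J[r := q]))"
    proof -
      have "set (J[r := q]) \<subseteq> {..<Suc s}" using J(2) q set_update_subset_insert[of J r q] by auto
      then show ?thesis using G J unfolding Good_def \<epsilon>_def by auto
    qed
    have "MF s \<epsilon> (\<lambda>i. (W s [a, J!r] i - W s [q] i) + W s (J[r := q]) i) ((ep s [a, J!r] - ep s [q]) + ep s (J[r := q]))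
        (CChr s * CA) (\<lambda>z. X r z a (J!r) q * A z (J[r := q]))"
      by (rule MF_mult[OF e Ch[OF a Jr q r, folded \<epsilon>_def] GJ'])
    then show ?thesis
      by (rule MF_cong) (use r J in \<open>auto simp: W_Cons ep_Cons W_update ep_update\<close>)
  qed
  have S1: "MF s \<epsilon> (W s (a # J)) (ep s (a # J)) (\<Sum>q<Suc s. CChr s * CA)
       (\<lambda>z. \<Sum>q<Suc s. X r z a (J!r) q * A z (J[r := q]))" if r: "r < n" for r
    by (rule MF_sum[OF _ TT]) (use r in auto)
  have S2: "MF s \<epsilon> (W s (a # J)) (ep s (a # J)) (\<Sum>r<n. \<Sum>q<Suc s. CChr s * CA)
       (\<lambda>z. \<Sum>r<n. \<Sum>q<Suc s. X r z a (J!r) q * A z (J[r := q]))"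
    by (rule MF_sum[OF _ S1]) auto
  have S3: "MF s \<epsilon> (W s (a # J)) (ep s (a # J)) (CA * n + (\<Sum>r<n. \<Sum>q<Suc s. CChr s * CA))
       (\<lambda>z. D a (\<lambda>w. A w J) z - (\<Sum>r<n. \<Sum>q<Suc s. X r z a (J!r) q * A z (J[r := q])))"
    by (rule MF_diff[OF MF_cong[OF D1] S2]) (auto simp: W_Cons ep_Cons)
  show "MF s (exp (- t)) (W s I) (ep s I) (CA * n + real n * (real (Suc s) * (CChr s * CA))) (\<lambda>z. Nb z I)"
    unfolding \<epsilon>_def[symmetric] aJ
    by (rule MF_cong[OF S3]) (auto simp: N J)
qed

lemma Good_nabla:
  assumes t: "0 \<le> t" and G: "Good s (exp (- t)) n CA A" and ks: "length ks = n"
  shows "Good s (exp (- t)) (Suc n) (CA * n + real n * (real (Suc s) * (CChr s * CA))) (nabla (Suc s) (gt s t) ks A)"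
proof (rule Good_nabla_gen[OF t G, where D = del and X = "\<lambda>r z a k q. if ks ! r then 0 else Chr (Suc s) (gt s t) z a k q"])
  show "MF s (exp (- t)) (\<lambda>j. W s [a, k] j - W s [q] j) (ep s [a, k] - ep s [q]) (CChr s)
          (\<lambda>z. if ks ! r then 0 else Chr (Suc s) (gt s t) z a k q)"
    if "a < Suc s" "k < Suc s" "q < Suc s" for a k q r
    by (rule MF_if[OF MF_Chr[OF t that]])
qed (auto simp: nabla_def ks simp del: W_single ep_single intro: MF_del)

lemma Good_nablabar:
  assumes t: "0 \<le> t" and G: "Good s (exp (- t)) n CA A" and ks: "length ks = n"
  shows "Good s (exp (- t)) (Suc n) (CA * n + real n * (real (Suc s) * (CChr s * CA))) (nablabar (Suc s) (gt s t) ks A)"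
proof (rule Good_nabla_gen[OF t G, where D = delbar and X = "\<lambda>r z a k q. if ks ! r then cnj (Chr (Suc s) (gt s t) z a k q) else 0"])
  show "MF s (exp (- t)) (\<lambda>j. W s [a, k] j - W s [q] j) (ep s [a, k] - ep s [q]) (CChr s)
          (\<lambda>z. if ks ! r then cnj (Chr (Suc s) (gt s t) z a k q) else 0)"
    if "a < Suc s" "k < Suc s" "q < Suc s" for a k q r
    by (rule MF_if2[OF MF_cnj[OF MF_Chr[OF t that]]])
qed (auto simp: nablabar_def ks simp del: W_single ep_single intro: MF_delbar)

lemma ginv_bound:
  assumes t: "0 \<le> t" and z: "z \<in> OT_cover s" and a: "a < Suc s" and b: "b < Suc s"
  shows "cmod (ginv (Suc s) (gt s t) z a b) \<le> 8 / (nu s (exp (- t)) z a * nu s (exp (- t)) z b)"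
proof -
  define \<epsilon> where "\<epsilon> = exp (- t)"
  have e: "0 < \<epsilon>" by (simp add: \<epsilon>_def)
  obtain c where c: "cmod c \<le> 8" "\<forall>z\<in>OT_cover s. Hc s \<epsilon> z a b =
      c * complex_of_real (\<epsilon> powr (- ep s [a, b]) * mono s (\<lambda>i. - W s [a, b] i) z)"
    using MF_H[OF t a b] unfolding MF_def \<epsilon>_def by blast
  have v: "\<epsilon> powr (- ep s [a, b]) * mono s (\<lambda>i. - W s [a, b] i) z = 1 / (nu s \<epsilon> z a * nu s \<epsilon> z b)"
    unfolding val_neg[OF z e] val_eq[OF z e] by (simp add: numeral_2_eq_2 lessThan_Suc)
  have p: "0 < nu s \<epsilon> z a * nu s \<epsilon> z b" using nu_pos[OF z e] by simp
  have h: "Hc s \<epsilon> z a b = c * complex_of_real (1 / (nu s \<epsilon> z a * nu s \<epsilon> z b))"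
    using c(2) z unfolding v[symmetric] by auto
  have "cmod (ginv (Suc s) (gt s t) z a b) = cmod c * (1 / (nu s \<epsilon> z a * nu s \<epsilon> z b))"
    unfolding ginv_eq[OF z] \<epsilon>_def[symmetric] h norm_mult norm_of_real using p by simp
  also have "\<dots> \<le> 8 / (nu s \<epsilon> z a * nu s \<epsilon> z b)"
    using c(1) p by (simp add: divide_right_mono)
  finally show ?thesis by (simp add: \<epsilon>_def)
qed

lemma tnorm_bound:
  assumes t: "0 \<le> t" and G: "Good s (exp (- t)) n C A" and ks: "length ks = n" and z: "z \<in> OT_cover s"
  shows "tnorm (Suc s) (gt s t) ks A z \<le> real (Suc s ^ n) * C * 8 ^ n"
proof -
  define \<epsilon> where "\<epsilon> = exp (- t)"
  have e: "0 < \<epsilon>" by (simp add: \<epsilon>_def)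
  define L where "L = {I. length I = length ks \<and> set I \<subseteq> {..<Suc s}}"
  have L': "L = {I. set I \<subseteq> {..<Suc s} \<and> length I = n}" unfolding L_def ks by auto
  have fin: "finite L" unfolding L' by (simp add: finite_lists_length_eq)
  have card: "card L = Suc s ^ n" unfolding L' by (simp add: card_lists_length_eq)
  define V where "V I = (\<Prod>r<n. nu s \<epsilon> z (I!r))" for I
  have Vp: "V I > 0" for I unfolding V_def using nu_pos[OF z e] by (simp add: prod_pos)
  have "set (replicate n (0::nat)) \<subseteq> {..<Suc s}" by (auto simp: set_replicate_conv_if)
  then have "MF s (exp (- t)) (W s (replicate n 0)) (ep s (replicate n 0)) C (\<lambda>z. A z (replicate n 0))"
    using G unfolding Good_def by simp
  then have C0: "0 \<le> C" by (rule MF_nonneg)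
  have AI: "cmod (A z I) \<le> C * V I" if I: "I \<in> L" for I
  proof -
    have lI: "length I = n" and sI: "set I \<subseteq> {..<Suc s}" using I unfolding L_def ks by auto
    have "MF s \<epsilon> (W s I) (ep s I) C (\<lambda>z. A z I)" using G lI sI unfolding Good_def \<epsilon>_def by simp
    then obtain c where c: "cmod c \<le> C" "\<forall>z\<in>OT_cover s. A z I = c * complex_of_real (\<epsilon> powr ep s I * mono s (W s I) z)"
      unfolding MF_def by blast
    have "A z I = c * complex_of_real (\<epsilon> powr ep s I * mono s (W s I) z)" using c(2) z by blast
    also have "\<dots> = c * complex_of_real (V I)" unfolding val_eq[OF z e] V_def lI ..
    finally have "A z I = c * complex_of_real (V I)" .
    then show ?thesis using c(1) Vp[of I] by (simp add: norm_mult mult_right_mono)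
  qed
  define Gp where "Gp I J = (\<Prod>r<length ks. if ks ! r then ginv (Suc s) (gt s t) z (I!r) (J!r)
        else ginv (Suc s) (gt s t) z (J!r) (I!r))" for I J
  have GI: "cmod (Gp I J) \<le> 8 ^ n / (V I * V J)" if I: "I \<in> L" and J: "J \<in> L" for I J
  proof -
    have "cmod (Gp I J) = (\<Prod>r<n. cmod (if ks ! r then ginv (Suc s) (gt s t) z (I!r) (J!r)
        else ginv (Suc s) (gt s t) z (J!r) (I!r)))" unfolding Gp_def ks by (simp add: prod_norm)
    also have "\<dots> \<le> (\<Prod>r<n. 8 / (nu s \<epsilon> z (I!r) * nu s \<epsilon> z (J!r)))"
    proof (rule prod_mono, intro conjI)
      fix r assume r: "r \<in> {..<n}"
      have "I!r \<in> set I" "J!r \<in> set J" using I J r unfolding L_def ks by auto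
      then have v: "I!r < Suc s" "J!r < Suc s" using I J unfolding L_def by auto
      show "cmod (if ks ! r then ginv (Suc s) (gt s t) z (I!r) (J!r) else ginv (Suc s) (gt s t) z (J!r) (I!r))
          \<le> 8 / (nu s \<epsilon> z (I!r) * nu s \<epsilon> z (J!r))"
        using ginv_bound[OF t z v(1,2)] ginv_bound[OF t z v(2,1)] unfolding \<epsilon>_def
        by (auto simp: mult.commute)
    qed simp
    also have "\<dots> = 8 ^ n / (V I * V J)" unfolding V_def
      by (simp add: prod_dividef prod.distrib)
    finally show ?thesis .
  qed
  have TB: "cmod (A z I * cnj (A z J) * Gp I J) \<le> C^2 * 8^n" if I: "I \<in> L" and J: "J \<in> L" for I J
  proof -
    have "cmod (A z I * cnj (A z J) * Gp I J) = cmod (A z I) * cmod (A z J) * cmod (Gp I J)"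
      by (simp add: norm_mult)
    also have "\<dots> \<le> (C * V I) * (C * V J) * (8 ^ n / (V I * V J))"
      by (intro mult_mono AI GI I J) (auto intro: mult_nonneg_nonneg C0 less_imp_le[OF Vp])
    also have "\<dots> = C^2 * 8^n" using Vp[of I] Vp[of J] by (simp add: field_simps power2_eq_square)
    finally show ?thesis .
  qed
  have "Re (\<Sum>I\<in>L. \<Sum>J\<in>L. A z I * cnj (A z J) * Gp I J) \<le> cmod (\<Sum>I\<in>L. \<Sum>J\<in>L. A z I * cnj (A z J) * Gp I J)"
    by (rule complex_Re_le_cmod)
  also have "\<dots> \<le> (\<Sum>I\<in>L. \<Sum>J\<in>L. cmod (A z I * cnj (A z J) * Gp I J))"
    by (rule order_trans[OF norm_sum sum_mono[OF norm_sum]])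
  also have "\<dots> \<le> (\<Sum>I\<in>L. \<Sum>J\<in>L. C^2 * 8^n)"
    by (intro sum_mono TB)
  also have "\<dots> = (real (Suc s ^ n) * C * 8 ^ n)^2 / 8 ^ n"
    by (simp add: card power2_eq_square field_simps)
  also have "\<dots> \<le> (real (Suc s ^ n) * C * 8 ^ n)^2"
  proof -
    have "(real (Suc s ^ n) * C * 8 ^ n)^2 / 8 ^ n \<le> (real (Suc s ^ n) * C * 8 ^ n)^2 / 1"
      by (rule divide_left_mono) auto
    then show ?thesis by simp
  qed
  finally have R: "Re (\<Sum>I\<in>L. \<Sum>J\<in>L. A z I * cnj (A z J) * Gp I J) \<le> (real (Suc s ^ n) * C * 8 ^ n)^2" .
  have nn: "0 \<le> real (Suc s ^ n) * C * 8 ^ n" using C0 by simp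
  show ?thesis unfolding tnorm_def L_def[symmetric] Gp_def[symmetric]
    using real_sqrt_le_mono[OF R] nn by simp
qed

lemma Good_mono: "Good s \<epsilon> n C A \<Longrightarrow> n = n' \<Longrightarrow> C \<le> C' \<Longrightarrow> Good s \<epsilon> n' C' A"
  unfolding Good_def using MF_mono by blast

lemma Good_nonneg: "Good s \<epsilon> n C A \<Longrightarrow> 0 \<le> C"
proof -
  assume G: "Good s \<epsilon> n C A"
  have "set (replicate n (0::nat)) \<subseteq> {..<Suc s}" by (auto simp: set_replicate_conv_if)
  then have "MF s \<epsilon> (W s (replicate n 0)) (ep s (replicate n 0)) C (\<lambda>z. A z (replicate n 0))"
    using G unfolding Good_def by simp
  then show "0 \<le> C" by (rule MF_nonneg)
qed

theorem lemma3p4: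
  fixes s :: nat
  assumes "s \<ge> 1"
  shows "\<exists>C. \<forall>t z. t \<ge> 0 \<and> z \<in> OT_cover s \<longrightarrow>
    (let m = Suc s; g = gt s t; T = torsion g;
         kT = [False, False, True]; nbT = nablabar m g kT T; kbT = True # kT;
         R = curv m g; kR = [False, True, False, True]
     in tnorm m g kT T z \<le> C
      \<and> tnorm m g [False, False, True, True] (dbarT T) z
          + tnorm m g (False # kT) (nabla m g kT T) z + tnorm m g kR R z \<le> C
      \<and> tnorm m g (True # kbT) (nablabar m g kbT nbT) z
          + tnorm m g (False # kbT) (nabla m g kbT nbT) z
          + tnorm m g (False # kR) (nabla m g kR R) z \<le> C)"
proof -
  define B :: "nat \<Rightarrow> real \<Rightarrow> real" where "B n C = real (Suc s ^ n) * C * 8 ^ n" for n C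
  define CT :: real where "CT = 4"
  define CdT :: real where "CdT = CT * 3 + CT * 3"
  define CnT :: real where "CnT = CT * 3 + 3 * (real (Suc s) * (CChr s * CT))"
  define CR :: real where "CR = 2 * 3 + real (Suc s) * (real (Suc s) * 32)"
  define Cnn :: real where "Cnn = CnT * 4 + 4 * (real (Suc s) * (CChr s * CnT))"
  define CnR :: real where "CnR = CR * 4 + 4 * (real (Suc s) * (CChr s * CR))"
  define C where "C = B 3 CT + B 4 CdT + B 4 CnT + B 4 CR + B 5 Cnn + B 5 Cnn + B 5 CnR"
  show ?thesis
  proof (rule exI[of _ C], intro allI impI)
    fix t :: real and z assume tz: "0 \<le> t \<and> z \<in> OT_cover s"
    then have t: "0 \<le> t" and z: "z \<in> OT_cover s" by auto
    let ?e = "exp (- t)" and ?g = "gt s t" and ?kT = "[False, False, True]"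
      and ?kR = "[False, True, False, True]"
    let ?T = "torsion ?g" and ?R = "curv (Suc s) ?g"
    let ?nbT = "nablabar (Suc s) ?g ?kT ?T"
    have GT: "Good s ?e 3 CT ?T" unfolding CT_def by (rule Good_torsion[OF t])
    have GdT: "Good s ?e 4 CdT (dbarT ?T)" unfolding CdT_def by (rule Good_dbarT[OF GT])
    have GnT: "Good s ?e 4 CnT (nabla (Suc s) ?g ?kT ?T)"
      by (rule Good_mono[OF Good_nabla[OF t GT, of ?kT]])
         (auto simp:  CnT_def)
    have GR: "Good s ?e 4 CR ?R" unfolding CR_def by (rule Good_curv[OF t])
    have GnbT: "Good s ?e 4 CnT ?nbT" 
      by (rule Good_mono[OF Good_nablabar[OF t GT, of ?kT]])
         (auto simp:  CnT_def)
    have G5a: "Good s ?e 5 Cnn (nablabar (Suc s) ?g (True # ?kT) ?nbT)"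
      by (rule Good_mono[OF Good_nablabar[OF t GnbT, of "True # ?kT"]])
         (auto simp:  Cnn_def)
    have G5b: "Good s ?e 5 Cnn (nabla (Suc s) ?g (True # ?kT) ?nbT)"
      by (rule Good_mono[OF Good_nabla[OF t GnbT, of "True # ?kT"]])
         (auto simp:  Cnn_def)
    have G5c: "Good s ?e 5 CnR (nabla (Suc s) ?g ?kR ?R)"
      by (rule Good_mono[OF Good_nabla[OF t GR, of ?kR]])
         (auto simp:  CnR_def)
    have nb: "tnorm (Suc s) ?g ks A z \<le> B n Cc" if "Good s ?e n Cc A" "length ks = n" for n Cc A ks
      unfolding B_def by (rule tnorm_bound[OF t that(1) that(2) z])
    have Bn: "0 \<le> B n Cc" if "Good s ?e n Cc A" for n Cc A
      using Good_nonneg[OF that] unfolding B_def by simp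
    have b1: "tnorm (Suc s) ?g ?kT ?T z \<le> B 3 CT" by (rule nb[OF GT]) simp
    have b2: "tnorm (Suc s) ?g [False, False, True, True] (dbarT ?T) z \<le> B 4 CdT" by (rule nb[OF GdT]) simp
    have b3: "tnorm (Suc s) ?g (False # ?kT) (nabla (Suc s) ?g ?kT ?T) z \<le> B 4 CnT" by (rule nb[OF GnT]) simp
    have b4: "tnorm (Suc s) ?g ?kR ?R z \<le> B 4 CR" by (rule nb[OF GR]) simp
    have b5: "tnorm (Suc s) ?g (True # True # ?kT) (nablabar (Suc s) ?g (True # ?kT) ?nbT) z \<le> B 5 Cnn"
      by (rule nb[OF G5a]) simp
    have b6: "tnorm (Suc s) ?g (False # True # ?kT) (nabla (Suc s) ?g (True # ?kT) ?nbT) z \<le> B 5 Cnn"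
      by (rule nb[OF G5b]) simp
    have b7: "tnorm (Suc s) ?g (False # ?kR) (nabla (Suc s) ?g ?kR ?R) z \<le> B 5 CnR"
      by (rule nb[OF G5c]) simp
    note nn = Bn[OF GT] Bn[OF GdT] Bn[OF GnT] Bn[OF GR] Bn[OF G5a] Bn[OF G5b] Bn[OF G5c]
    show "let m = Suc s; g = gt s t; T = torsion g;
         kT = [False, False, True]; nbT = nablabar m g kT T; kbT = True # kT;
         R = curv m g; kR = [False, True, False, True]
     in tnorm m g kT T z \<le> C
      \<and> tnorm m g [False, False, True, True] (dbarT T) z
          + tnorm m g (False # kT) (nabla m g kT T) z + tnorm m g kR R z \<le> C
      \<and> tnorm m g (True # kbT) (nablabar m g kbT nbT) z
          + tnorm m g (False # kbT) (nabla m g kbT nbT) z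
          + tnorm m g (False # kR) (nabla m g kR R) z \<le> C"
      unfolding Let_def
      using b1 b2 b3 b4 b5 b6 b7 nn unfolding C_def by linarith
  qed
qed

end
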